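(* Let $\mathcal B=(B_1,\dots,B_d)$ be a splitting of order $d$ of $B_J\in\mathbb R^{n\times n}$, let $\lambda\ne0$ be an eigenvalue of $T(\mathcal B)$ and let $[\alpha_1^T,\dots,\alpha_d^T]^T$ (with $\alpha_p\in\mathbb C^n$) be an associated eigenvector. Then $\alpha_p\ne0$ for every $p=1,\dots,d$.
   Context: For $B\in\mathbb R^{n\times n}$, a splitting of $B$ of order $d\ge1$ is an ordered $d$-tuple $\mathcal B=(B_1,\dots,B_d)$ of real $n\times n$ matrices with $B_p\neq O$ for all $p$, $\sum_{p=1}^d B_p=B$, and $B_p\circ B_q=O$ (Hadamard product) for $p\ne q$. The iteration matrix of $\mathcal B$ is the $dn\times dn$ matrix $T(\mathcal B)=(I_{dn}-\mathcal L)^{-1}\mathcal U$, where $\mathcal L,\mathcal U$ are $d\times d$ block matrices with $n\times n$ blocks, $\mathcal L_{ij}=B_j$ if $i>j$ and $O$ otherwise, $\mathcal U_{ij}=B_j$ if $i\le j$ and $O$ otherwise. *)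

theory Defs
  imports "Jordan_Normal_Form.Char_Poly" "Jordan_Normal_Form.Gauss_Jordan_Elimination"
begin

text \<open>A splitting of order d of an n x n real matrix B: d nonzero n x n matrices
  Bs 0, ..., Bs (d-1) (0-based indexing) summing to B, with pairwise zero Hadamard products.\<close>
definition is_splitting :: "nat \<Rightarrow> real mat \<Rightarrow> nat \<Rightarrow> (nat \<Rightarrow> real mat) \<Rightarrow> bool" where
  "is_splitting n B d Bs \<longleftrightarrow>
     d \<ge> 1 \<and> B \<in> carrier_mat n n \<and>
     (\<forall>p<d. Bs p \<in> carrier_mat n n \<and> Bs p \<noteq> 0\<^sub>m n n) \<and>
     (\<forall>i<n. \<forall>j<n. B $$ (i,j) = (\<Sum>p<d. Bs p $$ (i,j))) \<and>
     (\<forall>p<d. \<forall>q<d. p \<noteq> q \<longrightarrow> (\<forall>i<n. \<forall>j<n. Bs p $$ (i,j) * Bs q $$ (i,j) = 0))"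

text \<open>Block matrices: block (I,J) (0-based) occupies rows I*n..I*n+n-1, columns J*n..J*n+n-1.\<close>
definition split_L :: "nat \<Rightarrow> nat \<Rightarrow> (nat \<Rightarrow> real mat) \<Rightarrow> real mat" where
  "split_L n d Bs = mat (d*n) (d*n)
     (\<lambda>(i,j). if i div n > j div n then Bs (j div n) $$ (i mod n, j mod n) else 0)"

definition split_U :: "nat \<Rightarrow> nat \<Rightarrow> (nat \<Rightarrow> real mat) \<Rightarrow> real mat" where
  "split_U n d Bs = mat (d*n) (d*n)
     (\<lambda>(i,j). if i div n \<le> j div n then Bs (j div n) $$ (i mod n, j mod n) else 0)"

text \<open>Iteration matrix T = (I - L)^{-1} U (I - L is unit lower triangular, hence invertible).\<close>
definition iteration_matrix :: "nat \<Rightarrow> nat \<Rightarrow> (nat \<Rightarrow> real mat) \<Rightarrow> real mat" where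
  "iteration_matrix n d Bs =
     the (mat_inverse (1\<^sub>m (d*n) - split_L n d Bs)) * split_U n d Bs"

definition block_vec :: "nat \<Rightarrow> complex vec \<Rightarrow> nat \<Rightarrow> complex vec" where
  "block_vec n v p = vec n (\<lambda>i. v $ (p*n + i))"

end

theory Submission imports Defs begin
lemma sum_blocks: fixes d n :: nat shows "(\<Sum>k<d*n. f k) = (\<Sum>q<d. \<Sum>r<n. f (q*n+r))"
proof (induction d)
  case 0 then show ?case by simp
next
  case (Suc d)
  have "{..<Suc d * n} = {..<d*n} \<union> {d*n..<d*n+n}" by auto
  then have "(\<Sum>k<Suc d*n. f k) = (\<Sum>k<d*n. f k) + (\<Sum>k\<in>{d*n..<d*n+n}. f k)"
    by (simp add: sum.union_disjoint ivl_disj_int)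
  also have "(\<Sum>k\<in>{d*n..<d*n+n}. f k) = (\<Sum>r<n. f (d*n+r))"
    using sum.shift_bounds_nat_ivl[of f 0 "d*n" n] by (simp add: atLeast0LessThan add.commute)
  finally show ?case using Suc by simp
qed


lemma eq_lemma:
  fixes n d :: nat and Bs :: "nat \<Rightarrow> real mat"
    and lam :: complex and v :: "complex vec"
  assumes "d \<ge> 1"
    and "eigenvector (map_mat complex_of_real (iteration_matrix n d Bs)) v lam"
  shows "map_mat complex_of_real (split_U n d Bs) *\<^sub>v v
      = lam \<cdot>\<^sub>v (v - map_mat complex_of_real (split_L n d Bs) *\<^sub>v v)"
    and "v \<in> carrier_vec (d*n)" and "v \<noteq> 0\<^sub>v (d*n)"
proof -
  let ?N = "d*n"
  let ?M = "1\<^sub>m ?N - split_L n d Bs"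
  have Mc: "?M \<in> carrier_mat ?N ?N" by (simp add: split_L_def minus_carrier_mat)
  have Uc: "split_U n d Bs \<in> carrier_mat ?N ?N" by (simp add: split_U_def)
  have Lc: "split_L n d Bs \<in> carrier_mat ?N ?N" by (simp add: split_L_def)
  have "det ?M = prod_list (diag_mat ?M)"
    by (rule det_lower_triangular[OF _ Mc]) (auto simp: split_L_def, meson div_le_mono less_imp_le not_le)
  also have "\<dots> = 1" unfolding prod_list_diag_prod
    by (rule prod.neutral) (auto simp: split_L_def)
  finally have "det ?M \<noteq> 0" by simp
  hence unit: "?M \<in> Units (ring_mat TYPE(real) ?N (undefined::unit))"
    by (rule det_non_zero_imp_unit[OF Mc])
  obtain Mi where Mi: "mat_inverse ?M = Some Mi"
    using mat_inverse(1)[OF Mc, where b="undefined::unit"] unit by (cases "mat_inverse ?M") auto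
  from mat_inverse(2)[OF Mc Mi] have MMi: "?M * Mi = 1\<^sub>m ?N" and Mic: "Mi \<in> carrier_mat ?N ?N"
    by auto
  have T: "iteration_matrix n d Bs = Mi * split_U n d Bs"
    unfolding iteration_matrix_def Mi by simp
  from assms(2) have vc: "v \<in> carrier_vec ?N" and v0: "v \<noteq> 0\<^sub>v ?N"
    and ev: "map_mat complex_of_real (Mi * split_U n d Bs) *\<^sub>v v = lam \<cdot>\<^sub>v v"
    unfolding eigenvector_def T using Mic Uc by auto
  show "v \<in> carrier_vec (d*n)" "v \<noteq> 0\<^sub>v (d*n)" using vc v0 by auto
  let ?h = "map_mat complex_of_real"
  have hM: "?h ?M = 1\<^sub>m ?N - ?h (split_L n d Bs)"
    by (rule eq_matI) (auto simp: split_L_def)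
  have "?h ?M *\<^sub>v (?h (Mi * split_U n d Bs) *\<^sub>v v) = ?h ?M *\<^sub>v (lam \<cdot>\<^sub>v v)" using ev by simp
  moreover have "?h ?M *\<^sub>v (?h (Mi * split_U n d Bs) *\<^sub>v v) = ?h (split_U n d Bs) *\<^sub>v v"
  proof -
    have "?h (Mi * split_U n d Bs) = ?h Mi * ?h (split_U n d Bs)"
      by (rule of_real_hom.mat_hom_mult[OF Mic Uc])
    have hMc: "?h ?M \<in> carrier_mat ?N ?N" and hMic: "?h Mi \<in> carrier_mat ?N ?N"
      and hUc: "?h (split_U n d Bs) \<in> carrier_mat ?N ?N" using Mc Mic Uc by auto
    have hUv: "?h (split_U n d Bs) *\<^sub>v v \<in> carrier_vec ?N" using hUc vc by auto
    have "?h ?M *\<^sub>v (?h (Mi * split_U n d Bs) *\<^sub>v v) = ?h ?M *\<^sub>v (?h Mi *\<^sub>v (?h (split_U n d Bs) *\<^sub>v v))"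
      unfolding \<open>?h (Mi * split_U n d Bs) = ?h Mi * ?h (split_U n d Bs)\<close>
      using assoc_mult_mat_vec[OF hMic hUc vc] by simp
    also have "\<dots> = (?h ?M * ?h Mi) *\<^sub>v (?h (split_U n d Bs) *\<^sub>v v)"
      using assoc_mult_mat_vec[OF hMc hMic hUv] by simp
    also have "?h ?M * ?h Mi = 1\<^sub>m ?N"
      using of_real_hom.mat_hom_mult[OF Mc Mic, symmetric] MMi of_real_hom.mat_hom_one[of ?N] by metis
    finally show ?thesis using Uc vc by simp
  qed
  moreover have "?h ?M *\<^sub>v (lam \<cdot>\<^sub>v v) = lam \<cdot>\<^sub>v (v - ?h (split_L n d Bs) *\<^sub>v v)"
  proof -
    have "?h ?M *\<^sub>v (lam \<cdot>\<^sub>v v) = lam \<cdot>\<^sub>v (?h ?M *\<^sub>v v)"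
      using Mc vc by (intro mult_mat_vec) auto
    also have "?h ?M *\<^sub>v v = v - ?h (split_L n d Bs) *\<^sub>v v"
      unfolding hM using vc Lc by (subst minus_mult_distrib_mat_vec) auto
    finally show ?thesis .
  qed
  ultimately show "?h (split_U n d Bs) *\<^sub>v v = lam \<cdot>\<^sub>v (v - ?h (split_L n d Bs) *\<^sub>v v)" by simp
qed

lemma idx_lt: "p < d \<Longrightarrow> i < (n::nat) \<Longrightarrow> p*n+i < d*n"
proof -
  assume p: "p < d" and i: "i < n"
  have "p*n+i < Suc p * n" using i by simp
  also have "Suc p * n \<le> d*n" by (rule mult_le_mono1) (use p in simp)
  finally show ?thesis .
qed

lemma comp_U:
  fixes n d p i :: nat and Bs :: "nat \<Rightarrow> real mat" and v :: "complex vec"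
  assumes vc: "v \<in> carrier_vec (d*n)" and p: "p < d" and i: "i < n"
  shows "(map_mat complex_of_real (split_U n d Bs) *\<^sub>v v) $ (p*n+i)
     = (\<Sum>q\<in>{p..<d}. \<Sum>k<n. complex_of_real (Bs q $$ (i,k)) * v $ (q*n+k))"
proof -
  have j: "p*n+i < d*n" using p i
    by (rule idx_lt)
  have "(map_mat complex_of_real (split_U n d Bs) *\<^sub>v v) $ (p*n+i)
      = (\<Sum>k<d*n. complex_of_real (split_U n d Bs $$ (p*n+i, k)) * v $ k)"
    using j vc by (simp add: split_U_def scalar_prod_def lessThan_atLeast0 mult.commute)
  also have "\<dots> = (\<Sum>q<d. \<Sum>r<n. complex_of_real (split_U n d Bs $$ (p*n+i, q*n+r)) * v $ (q*n+r))"
    by (rule sum_blocks)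
  also have "\<dots> = (\<Sum>q<d. if p \<le> q then (\<Sum>r<n. complex_of_real (Bs q $$ (i,r)) * v $ (q*n+r)) else 0)"
  proof (rule sum.cong[OF refl])
    fix q assume q: "q \<in> {..<d}"
    have "complex_of_real (split_U n d Bs $$ (p*n+i, q*n+r)) * v $ (q*n+r)
       = (if p \<le> q then complex_of_real (Bs q $$ (i,r)) * v $ (q*n+r) else 0)" if r: "r < n" for r
    proof -
      have "q*n+r < d*n" using q r
        using idx_lt[of q d r n] by simp
      moreover have "(p*n+i) div n = p" "(p*n+i) mod n = i" "(q*n+r) div n = q" "(q*n+r) mod n = r"
        using i r by auto
      ultimately show ?thesis using j by (simp add: split_U_def)
    qed
    then show "(\<Sum>r<n. complex_of_real (split_U n d Bs $$ (p*n+i, q*n+r)) * v $ (q*n+r))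
      = (if p \<le> q then (\<Sum>r<n. complex_of_real (Bs q $$ (i,r)) * v $ (q*n+r)) else 0)"
      by (simp add: sum.If_cases)
  qed
  also have "\<dots> = (\<Sum>q\<in>{p..<d}. \<Sum>k<n. complex_of_real (Bs q $$ (i,k)) * v $ (q*n+k))"
    by (simp add: sum.If_cases) (rule sum.cong, auto)
  finally show ?thesis .
qed


lemma comp_L:
  fixes n d p i :: nat and Bs :: "nat \<Rightarrow> real mat" and v :: "complex vec"
  assumes vc: "v \<in> carrier_vec (d*n)" and p: "p < d" and i: "i < n"
  shows "(map_mat complex_of_real (split_L n d Bs) *\<^sub>v v) $ (p*n+i)
     = (\<Sum>q\<in>{..<p}. \<Sum>k<n. complex_of_real (Bs q $$ (i,k)) * v $ (q*n+k))"
proof -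
  have j: "p*n+i < d*n" using p i
    by (rule idx_lt)
  have "(map_mat complex_of_real (split_L n d Bs) *\<^sub>v v) $ (p*n+i)
      = (\<Sum>k<d*n. complex_of_real (split_L n d Bs $$ (p*n+i, k)) * v $ k)"
    using j vc by (simp add: split_L_def scalar_prod_def lessThan_atLeast0 mult.commute)
  also have "\<dots> = (\<Sum>q<d. \<Sum>r<n. complex_of_real (split_L n d Bs $$ (p*n+i, q*n+r)) * v $ (q*n+r))"
    by (rule sum_blocks)
  also have "\<dots> = (\<Sum>q<d. if q < p then (\<Sum>r<n. complex_of_real (Bs q $$ (i,r)) * v $ (q*n+r)) else 0)"
  proof (rule sum.cong[OF refl])
    fix q assume q: "q \<in> {..<d}"
    have "complex_of_real (split_L n d Bs $$ (p*n+i, q*n+r)) * v $ (q*n+r)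
       = (if q < p then complex_of_real (Bs q $$ (i,r)) * v $ (q*n+r) else 0)" if r: "r < n" for r
    proof -
      have "q*n+r < d*n" using q r
        using idx_lt[of q d r n] by simp
      moreover have "(p*n+i) div n = p" "(p*n+i) mod n = i" "(q*n+r) div n = q" "(q*n+r) mod n = r"
        using i r by auto
      ultimately show ?thesis using j by (simp add: split_L_def)
    qed
    then show "(\<Sum>r<n. complex_of_real (split_L n d Bs $$ (p*n+i, q*n+r)) * v $ (q*n+r))
      = (if q < p then (\<Sum>r<n. complex_of_real (Bs q $$ (i,r)) * v $ (q*n+r)) else 0)"
      by (simp add: sum.If_cases)
  qed
  also have "\<dots> = (\<Sum>q\<in>{..<p}. \<Sum>k<n. complex_of_real (Bs q $$ (i,k)) * v $ (q*n+k))"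
    by (simp add: sum.If_cases) (rule sum.cong, insert p, auto)
  finally show ?thesis .
qed


lemma main_aux:
  fixes n d :: nat and Bs :: "nat \<Rightarrow> real mat"
    and lam :: complex and v :: "complex vec"
  assumes d: "d \<ge> 1" and lam: "lam \<noteq> 0"
    and ev: "eigenvector (map_mat complex_of_real (iteration_matrix n d Bs)) v lam"
    and p0: "p0 < d" and Z0: "\<forall>i<n. v $ (p0*n+i) = 0"
  shows False
proof -
  note E0 = eq_lemma[OF d ev]
  have vc: "v \<in> carrier_vec (d*n)" and v0: "v \<noteq> 0\<^sub>v (d*n)" using E0 by auto
  define c where "c q i = (\<Sum>k<n. complex_of_real (Bs q $$ (i,k)) * v $ (q*n+k))" for q i
  have E: "(\<Sum>q\<in>{p..<d}. c q i) = lam * (v $ (p*n+i) - (\<Sum>q<p. c q i))" if "p < d" "i < n" for p i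
  proof -
    have jj: "p*n+i < d*n" using that
      by (rule idx_lt)
    have "(map_mat complex_of_real (split_U n d Bs) *\<^sub>v v) $ (p*n+i)
      = (lam \<cdot>\<^sub>v (v - map_mat complex_of_real (split_L n d Bs) *\<^sub>v v)) $ (p*n+i)"
      using E0(1) by simp
    then show ?thesis
      using comp_U[OF vc that, of Bs] comp_L[OF vc that, of Bs] jj vc
      unfolding c_def by (simp add: split_L_def)
  qed
  have cz: "c p i = 0" if "\<forall>i<n. v $ (p*n+i) = 0" for p i
    unfolding c_def using that by simp
  have step: "\<forall>i<n. v $ (Suc p*n+i) = 0" if "Suc p < d" "\<forall>i<n. v $ (p*n+i) = 0" for p
  proof (intro allI impI)
    fix i assume i: "i < n"
    have e1: "(\<Sum>q\<in>{p..<d}. c q i) = c p i + (\<Sum>q\<in>{Suc p..<d}. c q i)"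
      using that(1) by (simp add: sum.atLeast_Suc_lessThan)
    have e2: "(\<Sum>q<Suc p. c q i) = (\<Sum>q<p. c q i) + c p i" by simp
    from E[of p i] E[of "Suc p" i] that i e1 e2 cz[OF that(2)]
    have "lam * v $ (Suc p*n+i) = 0"
      by (simp add: algebra_simps)
    with lam show "v $ (Suc p*n+i) = 0" by simp
  qed
  have upg: "\<forall>i<n. v $ ((b+k)*n+i) = 0" if "b + k < d" "\<forall>i<n. v $ (b*n+i) = 0" for b k
    using that
  proof (induction k)
    case 0 then show ?case by simp
  next
    case (Suc k) then show ?case using step[of "b+k"] by simp
  qed
  have Zl: "\<forall>i<n. v $ ((d-1)*n+i) = 0" using upg[of p0 "d-1-p0"] p0 Z0 by simp
  have Zf: "\<forall>i<n. v $ (0*n+i) = 0"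
  proof (intro allI impI)
    fix i assume i: "i < n"
    have dd: "d - 1 < d" using d by simp
    have sg: "{d-1..<d} = {d-1}" using d by auto
    from E[OF dd i] cz[OF Zl] Zl i d sg
    have "lam * (\<Sum>q<d-1. c q i) = 0"
      by (simp add: algebra_simps)
    with lam have s1: "(\<Sum>q<d-1. c q i) = 0" by simp
    have "(\<Sum>q<d. c q i) = (\<Sum>q<d-1. c q i) + c (d-1) i"
    proof -
      have dS: "d = Suc (d-1)" using d by simp
      show ?thesis by (subst (1) dS, simp only: sum.lessThan_Suc)
    qed
    with s1 cz[OF Zl] have "(\<Sum>q<d. c q i) = 0" by simp
    moreover have d0: "0 < d" using d by simp
    moreover have "(\<Sum>q<d. c q i) = lam * (v $ (0*n+i) - (\<Sum>q<0. c q i))"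
      using E[OF d0 i] unfolding atLeast0LessThan by simp
    ultimately have "lam * v $ (0*n+i) = 0" by simp
    with lam show "v $ (0*n+i) = 0" by simp
  qed
  have all: "\<forall>i<n. v $ (k*n+i) = 0" if "k < d" for k
    using upg[of 0 k] Zf that by simp
  have "v = 0\<^sub>v (d*n)"
  proof (rule eq_vecI)
    fix j assume j: "j < dim_vec (0\<^sub>v (d*n))"
    hence j': "j < d*n" by simp
    have "j div n < d" using j' by (simp add: less_mult_imp_div_less)
    moreover have "j mod n < n" using j' by (cases "n = 0") auto
    ultimately have "v $ ((j div n)*n + j mod n) = 0" using all by blast
    then show "v $ j = 0\<^sub>v (d*n) $ j" using j' by simp
  qed (use vc in simp)
  with v0 show False by simp
qed


theorem proposition2p2:
  fixes n d :: nat and B :: "real mat" and Bs :: "nat \<Rightarrow> real mat"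
    and lam :: complex and v :: "complex vec"
  assumes "is_splitting n B d Bs"
    and "lam \<noteq> 0"
    and "eigenvector (map_mat complex_of_real (iteration_matrix n d Bs)) v lam"
  shows "\<forall>p<d. block_vec n v p \<noteq> 0\<^sub>v n"
proof (intro allI impI notI)
  fix p assume p: "p < d" and z: "block_vec n v p = 0\<^sub>v n"
  have d: "d \<ge> 1" using assms(1) unfolding is_splitting_def by simp
  have "\<forall>i<n. v $ (p*n+i) = 0"
  proof (intro allI impI)
    fix i assume "i < n"
    then show "v $ (p*n+i) = 0" using arg_cong[OF z, of "\<lambda>w. w $ i"] by (simp add: block_vec_def)
  qed
  then show False using main_aux[OF d assms(2) assms(3) p] by simp
qed

end
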